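(* Consider the GNEP described below, and let $\bar x$ be a KKT point of the associated Feasibility GNEP. Assume that the GNEP satisfies GNEP-EMFCQ in $\bar x$ (with respect to the constraint functions $c^\nu=(g^\nu,h^\nu)$). Then $g^\nu(\bar x)\le 0$ for every $\nu$, i.e. $\bar x$ is feasible for the GNEP; in particular, $\bar x$ is a solution of the Feasibility GNEP.
   Context: GNEP: $N$ players, variables $x=(x^1,\ldots,x^N)\in\mathbb{R}^n$, $x^\nu\in\mathbb{R}^{n_\nu}$. Player $\nu$ solves $\min_{x^\nu}\theta_\nu(x)$ s.t. $g^\nu(x)\le0$, $h^\nu(x)\le0$, with continuously differentiable $\theta_\nu:\mathbb{R}^n\to\mathbb{R}$, $g^\nu:\mathbb{R}^n\to\mathbb{R}^{m_\nu}$, $h^\nu:\mathbb{R}^n\to\mathbb{R}^{p_\nu}$. Notation: $v_+=\max\{0,v\}$ componentwise, $\nabla_{x^\nu}$ the partial (transposed) Jacobian w.r.t. $x^\nu$, $\min$ componentwise. Feasibility GNEP: player $\nu$ solves $\min_{x^\nu}\|g^\nu_+(x)\|^2$ s.t. $h^\nu(x)\le0$. $\bar x$ is a KKT point of it if for every $\nu$ there is $w^\nu\in\mathbb{R}^{p_\nu}$ with $\nabla_{x^\nu}\|g^\nu_+(\bar x)\|^2+\nabla_{x^\nu}h^\nu(\bar x)w^\nu=0$ and $\min\{-h^\nu(\bar x),w^\nu\}=0$. A solution of the Feasibility GNEP is a point $\bar x$ with $h^\nu(\bar x)\le 0$ and, for each $\nu$, $\|g^\nu_+(\bar x)\|^2\le\|g^\nu_+(x^\nu,\bar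 x^{-\nu})\|^2$ for all $x^\nu$ with $h^\nu(x^\nu,\bar x^{-\nu})\le0$. GNEP-EMFCQ at $x$: for every $\nu$ there is $d^\nu\in\mathbb{R}^{n_\nu}$ such that $\nabla_{x^\nu}c_i^\nu(x)^Td^\nu<0$ for every component $c_i^\nu$ of $c^\nu=(g^\nu,h^\nu)$ with $c_i^\nu(x)\ge0$. *)

theory Defs
  imports "HOL-Analysis.Analysis"
begin

definition C1_on_UNIV :: "(real^'n \<Rightarrow> real) \<Rightarrow> bool" where
  "C1_on_UNIV f \<longleftrightarrow> (\<exists>f'. (\<forall>x. (f has_derivative blinfun_apply (f' x)) (at x)) \<and> continuous_on UNIV f')"

definition pder :: "(real^'n \<Rightarrow> real) \<Rightarrow> real^'n \<Rightarrow> 'n \<Rightarrow> real" where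
  "pder f x k = frechet_derivative f (at x) (axis k 1)"

definition sqviol :: "(nat \<Rightarrow> real^'n \<Rightarrow> real) \<Rightarrow> nat \<Rightarrow> real^'n \<Rightarrow> real" where
  "sqviol g m x = (\<Sum>i<m. (max 0 (g i x))\<^sup>2)"

text \<open>KKT point of the Feasibility GNEP. Players nu < N, block of player nu is blk nu
  (a set of coordinates), g nu i / h nu j are the components of g^nu / h^nu.\<close>
definition feas_KKT ::
  "nat \<Rightarrow> (nat \<Rightarrow> 'n set) \<Rightarrow> (nat \<Rightarrow> nat) \<Rightarrow> (nat \<Rightarrow> nat) \<Rightarrow>
   (nat \<Rightarrow> nat \<Rightarrow> real^'n \<Rightarrow> real) \<Rightarrow> (nat \<Rightarrow> nat \<Rightarrow> real^'n \<Rightarrow> real) \<Rightarrow> real^'n \<Rightarrow> bool" where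
  "feas_KKT N blk m p g h xb \<longleftrightarrow>
     (\<forall>\<nu><N. \<exists>w :: nat \<Rightarrow> real.
        (\<forall>k\<in>blk \<nu>. pder (sqviol (g \<nu>) (m \<nu>)) xb k + (\<Sum>j<p \<nu>. pder (h \<nu> j) xb k * w j) = 0)
      \<and> (\<forall>j<p \<nu>. min (- h \<nu> j xb) (w j) = 0))"

definition feas_solution ::
  "nat \<Rightarrow> (nat \<Rightarrow> 'n set) \<Rightarrow> (nat \<Rightarrow> nat) \<Rightarrow> (nat \<Rightarrow> nat) \<Rightarrow>
   (nat \<Rightarrow> nat \<Rightarrow> real^'n \<Rightarrow> real) \<Rightarrow> (nat \<Rightarrow> nat \<Rightarrow> real^'n \<Rightarrow> real) \<Rightarrow> real^'n \<Rightarrow> bool" where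
  "feas_solution N blk m p g h xb \<longleftrightarrow>
     (\<forall>\<nu><N. \<forall>j<p \<nu>. h \<nu> j xb \<le> 0)
   \<and> (\<forall>\<nu><N. \<forall>y :: real^'n. (\<forall>k. k \<notin> blk \<nu> \<longrightarrow> y $ k = xb $ k) \<longrightarrow> (\<forall>j<p \<nu>. h \<nu> j y \<le> 0)
          \<longrightarrow> sqviol (g \<nu>) (m \<nu>) xb \<le> sqviol (g \<nu>) (m \<nu>) y)"

text \<open>GNEP-EMFCQ at x w.r.t. c^nu = (g^nu, h^nu); directions d^nu in R^{n_nu} are
  vectors supported on the block of player nu.\<close>
definition GNEP_EMFCQ ::
  "nat \<Rightarrow> (nat \<Rightarrow> 'n set) \<Rightarrow> (nat \<Rightarrow> nat) \<Rightarrow> (nat \<Rightarrow> nat) \<Rightarrow>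
   (nat \<Rightarrow> nat \<Rightarrow> real^'n \<Rightarrow> real) \<Rightarrow> (nat \<Rightarrow> nat \<Rightarrow> real^'n \<Rightarrow> real) \<Rightarrow> real^'n \<Rightarrow> bool" where
  "GNEP_EMFCQ N blk m p g h x \<longleftrightarrow>
     (\<forall>\<nu><N. \<exists>d :: real^'n. (\<forall>k. k \<notin> blk \<nu> \<longrightarrow> d $ k = 0)
        \<and> (\<forall>i<m \<nu>. g \<nu> i x \<ge> 0 \<longrightarrow> (\<Sum>k\<in>blk \<nu>. pder (g \<nu> i) x k * d $ k) < 0)
        \<and> (\<forall>j<p \<nu>. h \<nu> j x \<ge> 0 \<longrightarrow> (\<Sum>k\<in>blk \<nu>. pder (h \<nu> j) x k * d $ k) < 0))"

end

theory Submission
  imports Defs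
begin

lemma maxsq_deriv: "((\<lambda>t::real. (max 0 t)^2) has_real_derivative 2 * max 0 t) (at t)"
proof -
  consider "t > 0" | "t < 0" | "t = 0" by linarith
  then show ?thesis
  proof cases
    case 1
    have "((\<lambda>t::real. t^2) has_real_derivative 2 * t) (at t)"
      by (auto intro!: derivative_eq_intros)
    from has_field_derivative_transform_within_open[OF this, of "{0<..}"] 1 show ?thesis by auto
  next
    case 2
    have "((\<lambda>t::real. 0) has_real_derivative 0) (at t)"
      by (auto intro!: derivative_eq_intros)
    from has_field_derivative_transform_within_open[OF this, of "{..<0}"] 2 show ?thesis by auto
  next
    case 3
    have "((\<lambda>y::real. (max 0 y)^2 / y) \<longlongrightarrow> 0) (at 0)"
    proof (rule Lim_null_comparison)
      show "\<forall>\<^sub>F y in at 0. norm ((max 0 y)^2 / y) \<le> \<bar>y\<bar>"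
      proof (rule always_eventually, rule allI)
        fix y :: real
        show "norm ((max 0 y)^2 / y) \<le> \<bar>y\<bar>"
          by (cases "y > 0") (auto simp: power2_eq_square)
      qed
      show "((\<lambda>y::real. \<bar>y\<bar>) \<longlongrightarrow> 0) (at 0)"
        using tendsto_rabs[OF tendsto_ident_at[of 0 UNIV]] by simp
    qed
    then show ?thesis using 3 by (simp add: has_field_derivative_iff)
  qed
qed

lemma C1_diff: "C1_on_UNIV f \<Longrightarrow> f differentiable (at x)"
  unfolding C1_on_UNIV_def differentiable_def by blast

lemma sqviol_hasderiv:
  fixes g :: "nat \<Rightarrow> real^'n \<Rightarrow> real"
  assumes "\<And>i. i<m \<Longrightarrow> g i differentiable (at x)"
  shows "(sqviol g m has_derivative (\<lambda>v. \<Sum>i<m. 2 * max 0 (g i x) * frechet_derivative (g i) (at x) v)) (at x)"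
proof -
  have e: "sqviol g m = (\<lambda>x. \<Sum>i<m. (max 0 (g i x))\<^sup>2)" by (rule ext) (simp add: sqviol_def)
  show ?thesis unfolding e
  proof (rule has_derivative_sum)
    fix i assume "i \<in> {..<m}"
    then have d: "(g i has_derivative frechet_derivative (g i) (at x)) (at x)"
      using assms frechet_derivative_works by blast
    have "((\<lambda>t::real. (max 0 t)^2) has_derivative (*) (2 * max 0 (g i x))) (at (g i x))"
      using maxsq_deriv has_field_derivative_def by blast
    from has_derivative_compose[OF d this]
    show "((\<lambda>x. (max 0 (g i x))\<^sup>2) has_derivative (\<lambda>v. 2 * max 0 (g i x) * frechet_derivative (g i) (at x) v)) (at x)"
      by simp
  qed
qed

lemma pder_sqviol:
  fixes g :: "nat \<Rightarrow> real^'n \<Rightarrow> real"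
  assumes "\<And>i. i<m \<Longrightarrow> g i differentiable (at x)"
  shows "pder (sqviol g m) x k = (\<Sum>i<m. 2 * max 0 (g i x) * pder (g i) x k)"
proof -
  have "frechet_derivative (sqviol g m) (at x) = (\<lambda>v. \<Sum>i<m. 2 * max 0 (g i x) * frechet_derivative (g i) (at x) v)"
    using frechet_derivative_at[OF sqviol_hasderiv[OF assms]] by simp
  then show ?thesis unfolding pder_def by simp
qed
theorem theorem4p3:
  fixes N :: nat
    and blk :: "nat \<Rightarrow> 'n::finite set"
    and m p :: "nat \<Rightarrow> nat"
    and \<theta> :: "nat \<Rightarrow> real^'n \<Rightarrow> real"
    and g h :: "nat \<Rightarrow> nat \<Rightarrow> real^'n \<Rightarrow> real"
    and xb :: "real^'n"
  assumes partition: "(\<Union>\<nu><N. blk \<nu>) = UNIV"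
    and disjoint: "\<And>\<nu> \<mu>. \<nu> < N \<Longrightarrow> \<mu> < N \<Longrightarrow> \<nu> \<noteq> \<mu> \<Longrightarrow> blk \<nu> \<inter> blk \<mu> = {}"
    and C1_theta: "\<And>\<nu>. \<nu> < N \<Longrightarrow> C1_on_UNIV (\<theta> \<nu>)"
    and C1_g: "\<And>\<nu> i. \<nu> < N \<Longrightarrow> i < m \<nu> \<Longrightarrow> C1_on_UNIV (g \<nu> i)"
    and C1_h: "\<And>\<nu> j. \<nu> < N \<Longrightarrow> j < p \<nu> \<Longrightarrow> C1_on_UNIV (h \<nu> j)"
    and KKT: "feas_KKT N blk m p g h xb"
    and EMFCQ: "GNEP_EMFCQ N blk m p g h xb"
  shows "(\<forall>\<nu><N. \<forall>i<m \<nu>. g \<nu> i xb \<le> 0) \<and> feas_solution N blk m p g h xb"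
proof -
  have hle: "\<forall>\<nu><N. \<forall>j<p \<nu>. h \<nu> j xb \<le> 0"
  proof (intro allI impI)
    fix \<nu> j assume "\<nu> < N" "j < p \<nu>"
    then obtain w where "\<forall>j<p \<nu>. min (- h \<nu> j xb) (w j) = 0"
      using KKT unfolding feas_KKT_def by blast
    then have "min (- h \<nu> j xb) (w j) = 0" using \<open>j < p \<nu>\<close> by blast
    then show "h \<nu> j xb \<le> 0" by (auto simp: min_def split: if_splits)
  qed
  have gle: "\<forall>\<nu><N. \<forall>i<m \<nu>. g \<nu> i xb \<le> 0"
  proof (intro allI impI)
    fix \<nu> i0 assume nu: "\<nu> < N" and i0: "i0 < m \<nu>"
    show "g \<nu> i0 xb \<le> 0"
    proof (rule ccontr)
      assume "\<not> g \<nu> i0 xb \<le> 0"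
      then have pos: "g \<nu> i0 xb > 0" by simp
      obtain w where kk: "\<forall>k\<in>blk \<nu>. pder (sqviol (g \<nu>) (m \<nu>)) xb k + (\<Sum>j<p \<nu>. pder (h \<nu> j) xb k * w j) = 0"
        and cs: "\<forall>j<p \<nu>. min (- h \<nu> j xb) (w j) = 0"
        using KKT nu unfolding feas_KKT_def by blast
      obtain d :: "real^'n" where
        dg: "\<forall>i<m \<nu>. g \<nu> i xb \<ge> 0 \<longrightarrow> (\<Sum>k\<in>blk \<nu>. pder (g \<nu> i) xb k * d $ k) < 0"
        and dh: "\<forall>j<p \<nu>. h \<nu> j xb \<ge> 0 \<longrightarrow> (\<Sum>k\<in>blk \<nu>. pder (h \<nu> j) xb k * d $ k) < 0"
        using EMFCQ nu unfolding GNEP_EMFCQ_def by blast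
      define a where "a i = max 0 (g \<nu> i xb)" for i
      define G where "G i k = pder (g \<nu> i) xb k" for i k
      define H where "H j k = pder (h \<nu> j) xb k" for j k
      have kk2: "\<forall>k\<in>blk \<nu>. (\<Sum>i<m \<nu>. 2 * a i * G i k) + (\<Sum>j<p \<nu>. H j k * w j) = 0"
      proof
        fix k assume "k \<in> blk \<nu>"
        have "pder (sqviol (g \<nu>) (m \<nu>)) xb k = (\<Sum>i<m \<nu>. 2 * a i * G i k)"
          unfolding a_def G_def
          by (rule pder_sqviol) (use C1_g C1_diff nu in blast)
        with kk \<open>k \<in> blk \<nu>\<close> show "(\<Sum>i<m \<nu>. 2 * a i * G i k) + (\<Sum>j<p \<nu>. H j k * w j) = 0"
          unfolding H_def by auto
      qed
      have "0 = (\<Sum>k\<in>blk \<nu>. ((\<Sum>i<m \<nu>. 2 * a i * G i k) + (\<Sum>j<p \<nu>. H j k * w j)) * d $ k)"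
        using kk2 by simp
      also have "\<dots> = (\<Sum>k\<in>blk \<nu>. (\<Sum>i<m \<nu>. 2 * a i * (G i k * d $ k))) + (\<Sum>k\<in>blk \<nu>. (\<Sum>j<p \<nu>. w j * (H j k * d $ k)))"
        unfolding sum.distrib[symmetric] by (rule sum.cong[OF refl]) (simp add: distrib_left distrib_right sum_distrib_left mult_ac)
      also have "\<dots> = (\<Sum>i<m \<nu>. 2 * a i * (\<Sum>k\<in>blk \<nu>. G i k * d $ k)) + (\<Sum>j<p \<nu>. w j * (\<Sum>k\<in>blk \<nu>. H j k * d $ k))"
        by (simp add: sum_distrib_left sum.swap[of _ "blk \<nu>"])
      also have "\<dots> < 0"
      proof -
        have A: "(\<Sum>i<m \<nu>. 2 * a i * (\<Sum>k\<in>blk \<nu>. G i k * d $ k)) < 0"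
        proof -
          have "(\<Sum>i<m \<nu>. 2 * a i * (\<Sum>k\<in>blk \<nu>. G i k * d $ k)) < (\<Sum>i<m \<nu>. 0)"
          proof (rule sum_strict_mono_ex1)
            show "\<forall>i\<in>{..<m \<nu>}. 2 * a i * (\<Sum>k\<in>blk \<nu>. G i k * d $ k) \<le> 0"
            proof
              fix i assume "i \<in> {..<m \<nu>}"
              show "2 * a i * (\<Sum>k\<in>blk \<nu>. G i k * d $ k) \<le> 0"
              proof (cases "g \<nu> i xb > 0")
                case True
                then have "(\<Sum>k\<in>blk \<nu>. G i k * d $ k) < 0" using dg \<open>i \<in> {..<m \<nu>}\<close> unfolding G_def by auto
                moreover have "a i \<ge> 0" unfolding a_def by simp
                ultimately show ?thesis by (simp add: mult_nonneg_nonpos)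
              next
                case False
                then have "a i = 0" unfolding a_def by simp
                then show ?thesis by simp
              qed
            qed
            have "(\<Sum>k\<in>blk \<nu>. G i0 k * d $ k) < 0" using dg i0 pos unfolding G_def by auto
            moreover have "a i0 > 0" unfolding a_def using pos by simp
            ultimately have "2 * a i0 * (\<Sum>k\<in>blk \<nu>. G i0 k * d $ k) < 0" by (simp add: mult_pos_neg)
            then show "\<exists>i\<in>{..<m \<nu>}. 2 * a i * (\<Sum>k\<in>blk \<nu>. G i k * d $ k) < 0" using i0 by auto
          qed simp
          then show ?thesis by simp
        qed
        have B: "(\<Sum>j<p \<nu>. w j * (\<Sum>k\<in>blk \<nu>. H j k * d $ k)) \<le> 0"
        proof (rule sum_nonpos)
          fix j assume j: "j \<in> {..<p \<nu>}"
          have c: "min (- h \<nu> j xb) (w j) = 0" using cs j by auto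
          show "w j * (\<Sum>k\<in>blk \<nu>. H j k * d $ k) \<le> 0"
          proof (cases "w j = 0")
            case False
            then have "w j > 0" "h \<nu> j xb = 0" using c by (auto simp: min_def split: if_splits)
            moreover have "(\<Sum>k\<in>blk \<nu>. H j k * d $ k) < 0" using dh j calculation unfolding H_def by auto
            ultimately show ?thesis by (simp add: mult_pos_neg less_imp_le)
          qed simp
        qed
        from A B show ?thesis by linarith
      qed
      finally show False by simp
    qed
  qed
  have "feas_solution N blk m p g h xb"
  proof -
    have z: "sqviol (g \<nu>) (m \<nu>) xb = 0" if "\<nu> < N" for \<nu>
      using gle that unfolding sqviol_def by (simp add: max_absorb1)
    have nn: "0 \<le> sqviol (g \<nu>) (m \<nu>) y" for \<nu> y
      unfolding sqviol_def by (simp add: sum_nonneg)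
    show ?thesis unfolding feas_solution_def using hle z nn by simp
  qed
  with gle show ?thesis by blast
qed

end
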